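(* Let $\alpha>1$, $M>0$, $c_0>0$, $T>0$, and $c=\alpha^{-1/(\alpha-1)}$. Define for $0\le t<T$, $\rho\ge0$, $$\underline m(t,\rho)=\begin{cases}0,& \rho<c_0-\alpha^{1/\alpha}M(T-t)^{1/\alpha},\\ \Big(M^{\frac\alpha{\alpha-1}}-c\,\dfrac{(c_0-\rho)^{\frac\alpha{\alpha-1}}}{(T-t)^{\frac1{\alpha-1}}}\Big)^{\frac{\alpha-1}\alpha}, & c_0-\alpha^{1/\alpha}M(T-t)^{1/\alpha}\le\rho<c_0,\\ M,&\rho\ge c_0.\end{cases}$$ Then $\underline m$ is continuous and satisfies the viscosity subsolution inequality $p_1+(p_2)_+^\alpha\,\underline m(t,\rho)\le0$ for all $(t,\rho)\in(0,T)\times(0,\infty)$ and all $(p_1,p_2)\in D^+\underline m(t,\rho)$.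
   Context: Fréchet superdifferential: $D^+f(x)=\{p\in\mathbb R^n:\limsup_{y\to x}\frac{f(y)-f(x)-p\cdot(y-x)}{|y-x|}\le0\}$. The equation is the mass equation $m_t+m(m_\rho)_+^\alpha=0$ for radial solutions in a volume variable $\rho$. *)

theory Defs
  imports "HOL-Analysis.Analysis"
begin

definition frechet_superdiff :: "('a::real_inner \<Rightarrow> real) \<Rightarrow> 'a \<Rightarrow> 'a set" where
  "frechet_superdiff f x =
     {p. Limsup (at x) (\<lambda>y. ereal ((f y - f x - p \<bullet> (y - x)) / norm (y - x))) \<le> 0}"

definition mlow :: "real \<Rightarrow> real \<Rightarrow> real \<Rightarrow> real \<Rightarrow> real \<Rightarrow> real \<Rightarrow> real" where
  "mlow \<alpha> M c0 T t \<rho> =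
     (let c = \<alpha> powr (- 1 / (\<alpha> - 1)) in
      if \<rho> < c0 - \<alpha> powr (1 / \<alpha>) * M * (T - t) powr (1 / \<alpha>) then 0
      else if \<rho> < c0 then
        (M powr (\<alpha> / (\<alpha> - 1))
          - c * (c0 - \<rho>) powr (\<alpha> / (\<alpha> - 1)) / (T - t) powr (1 / (\<alpha> - 1)))
          powr ((\<alpha> - 1) / \<alpha>)
      else M)"

end

theory Submission
  imports Defs
begin

lemma Limsup_filter_le:
  assumes "F \<le> G" shows "Limsup F f \<le> Limsup G (f::_\<Rightarrow>ereal)"
  unfolding Limsup_def
  by (rule INF_superset_mono) (auto intro: filter_leD[OF assms])

lemma superdiff_dir:
  fixes f :: "'a::real_inner \<Rightarrow> real"
  assumes p: "p \<in> frechet_superdiff f x" and v: "v \<noteq> 0"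
  shows "Limsup (at_right 0) (\<lambda>s. ereal ((f (x + s *\<^sub>R v) - f x - p \<bullet> (s *\<^sub>R v)) / norm (s *\<^sub>R v))) \<le> 0"
proof -
  let ?F = "\<lambda>y. ereal ((f y - f x - p \<bullet> (y - x)) / norm (y - x))"
  have lim: "filterlim (\<lambda>s::real. x + s *\<^sub>R v) (at x) (at_right 0)"
  proof (rule filterlim_atI)
    have "((\<lambda>s::real. x + s *\<^sub>R v) \<longlongrightarrow> x + 0 *\<^sub>R v) (at_right 0)"
      by (intro tendsto_intros)
    then show "((\<lambda>s::real. x + s *\<^sub>R v) \<longlongrightarrow> x) (at_right 0)" by simp
    show "\<forall>\<^sub>F s in at_right 0. x + s *\<^sub>R v \<noteq> x"
      using v by (auto simp: eventually_at_right_less eventually_at_filter intro!: eventually_mono[OF eventually_at_right_less[of 0]])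
  qed
  have "Limsup (at_right 0) (\<lambda>s. ?F (x + s *\<^sub>R v)) \<le> Limsup (filtermap (\<lambda>s. x + s *\<^sub>R v) (at_right (0::real))) ?F"
    by (rule Limsup_filtermap_ge)
  also have "\<dots> \<le> Limsup (at x) ?F"
    using lim unfolding filterlim_def by (rule Limsup_filter_le)
  also have "\<dots> \<le> 0" using p by (simp add: frechet_superdiff_def)
  finally show ?thesis by simp
qed


lemma superdiff_dir_lim:
  fixes f :: "'a::real_inner \<Rightarrow> real"
  assumes p: "p \<in> frechet_superdiff f x" and v: "v \<noteq> 0"
    and L: "((\<lambda>s. (f (x + s *\<^sub>R v) - f x) / s) \<longlongrightarrow> L) (at_right 0)"
  shows "L \<le> p \<bullet> v"
proof -
  have ev: "\<forall>\<^sub>F s in at_right 0. (f (x + s *\<^sub>R v) - f x - p \<bullet> (s *\<^sub>R v)) / norm (s *\<^sub>R v)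
      = ((f (x + s *\<^sub>R v) - f x) / s - p \<bullet> v) / norm v"
    by (rule eventually_mono[OF eventually_at_right_less[of 0]])
       (use v in \<open>simp add: inner_scaleR_right divide_simps\<close>)
  have "((\<lambda>s. ((f (x + s *\<^sub>R v) - f x) / s - p \<bullet> v) / norm v) \<longlongrightarrow> (L - p \<bullet> v) / norm v) (at_right 0)"
    by (intro tendsto_intros L) (use v in auto)
  then have "((\<lambda>s. (f (x + s *\<^sub>R v) - f x - p \<bullet> (s *\<^sub>R v)) / norm (s *\<^sub>R v)) \<longlongrightarrow> (L - p \<bullet> v) / norm v) (at_right 0)"
    using tendsto_cong[OF ev] by simp
  then have "((\<lambda>s. ereal ((f (x + s *\<^sub>R v) - f x - p \<bullet> (s *\<^sub>R v)) / norm (s *\<^sub>R v))) \<longlongrightarrow> ereal ((L - p \<bullet> v) / norm v)) (at_right 0)"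
    by (rule tendsto_ereal)
  then have "Limsup (at_right 0) (\<lambda>s. ereal ((f (x + s *\<^sub>R v) - f x - p \<bullet> (s *\<^sub>R v)) / norm (s *\<^sub>R v))) = ereal ((L - p \<bullet> v) / norm v)"
    by (intro lim_imp_Limsup) auto
  with superdiff_dir[OF p v] have "(L - p \<bullet> v) / norm v \<le> 0" by simp
  with v show ?thesis by (simp add: divide_le_0_iff)
qed

lemma superdiff_dir_blow:
  fixes f :: "'a::real_inner \<Rightarrow> real"
  assumes p: "p \<in> frechet_superdiff f x" and v: "v \<noteq> 0"
    and ev: "\<forall>\<^sub>F s in at_right 0. f (x + s *\<^sub>R v) - f x \<ge> (p \<bullet> v + norm v) * s"
  shows False
proof -
  have "\<forall>\<^sub>F s in at_right 0. ereal 1 \<le> ereal ((f (x + s *\<^sub>R v) - f x - p \<bullet> (s *\<^sub>R v)) / norm (s *\<^sub>R v))"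
    using ev eventually_at_right_less[of 0]
  proof eventually_elim
    case (elim s)
    then have sn: "0 < s * norm v" using v by simp
    have "s * norm v \<le> f (x + s *\<^sub>R v) - f x - s * (p \<bullet> v)"
      using elim(1) by (simp add: algebra_simps)
    then have "1 \<le> (f (x + s *\<^sub>R v) - f x - s * (p \<bullet> v)) / (s * norm v)"
      using sn by (simp add: pos_le_divide_eq)
    then show ?case using elim(2) by (simp add: inner_scaleR_right)
  qed
  then have "ereal 1 \<le> Limsup (at_right (0::real)) (\<lambda>s. ereal ((f (x + s *\<^sub>R v) - f x - p \<bullet> (s *\<^sub>R v)) / norm (s *\<^sub>R v)))"
    by (intro le_Limsup) auto
  with superdiff_dir[OF p v] have "ereal 1 \<le> 0" by (rule order.trans[rotated])
  then show False by simp
qed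

lemma deriv_dir:
  assumes "(h has_real_derivative D) (at r)" and "c \<noteq> 0"
  shows "((\<lambda>s. (h (r + s * c) - h r) / s) \<longlongrightarrow> D * c) (at_right 0)"
proof -
  have d: "((\<lambda>y. (h (r + y) - h r) / y) \<longlongrightarrow> D) (at 0)"
    using assms(1) by (simp only: DERIV_def)
  have lim: "filterlim (\<lambda>s::real. s * c) (at 0) (at_right 0)"
  proof (rule filterlim_atI)
    show "((\<lambda>s::real. s * c) \<longlongrightarrow> 0) (at_right 0)"
      by (rule tendsto_mult_left_zero) (rule tendsto_ident_at)
    show "\<forall>\<^sub>F s in at_right 0. s * c \<noteq> 0"
      by (rule eventually_mono[OF eventually_at_right_less[of 0]]) (use assms(2) in simp)
  qed
  have "((\<lambda>s. (h (r + s * c) - h r) / (s * c)) \<longlongrightarrow> D) (at_right 0)"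
    by (rule filterlim_compose[OF d lim])
  then have "((\<lambda>s. (h (r + s * c) - h r) / (s * c) * c) \<longlongrightarrow> D * c) (at_right 0)"
    by (rule tendsto_mult[OF _ tendsto_const])
  moreover have "\<forall>\<^sub>F s in at_right 0. (h (r + s * c) - h r) / (s * c) * c = (h (r + s * c) - h r) / s"
    by (rule eventually_mono[OF eventually_at_right_less[of 0]]) (use assms(2) in simp)
  ultimately show ?thesis by (rule tendsto_cong[THEN iffD1, rotated])
qed

lemma superdiff_t:
  fixes f :: "real \<times> real \<Rightarrow> real"
  assumes p: "(p1, p2) \<in> frechet_superdiff f (t, r)"
    and d: "((\<lambda>s. f (s, r)) has_real_derivative D) (at t)"
  shows "p1 \<le> D"
proof -
  have "((\<lambda>s. (f ((t, r) + s *\<^sub>R (-1, 0)) - f (t, r)) / s) \<longlongrightarrow> D * (-1)) (at_right 0)"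
    using deriv_dir[OF d, of "-1"] by (simp add: algebra_simps)
  from superdiff_dir_lim[OF p _ this] show ?thesis by (simp add: zero_prod_def)
qed

lemma superdiff_r:
  fixes f :: "real \<times> real \<Rightarrow> real"
  assumes p: "(p1, p2) \<in> frechet_superdiff f (t, r)"
    and d: "((\<lambda>s. (f (t, r) - f (t, r - s)) / s) \<longlongrightarrow> D) (at_right 0)"
  shows "p2 \<le> D"
proof -
  have "((\<lambda>s. (f ((t, r) + s *\<^sub>R (0, -1)) - f (t, r)) / s) \<longlongrightarrow> - D) (at_right 0)"
    using tendsto_minus[OF d] by (simp add: algebra_simps minus_divide_left)
  from superdiff_dir_lim[OF p _ this] show ?thesis by (simp add: zero_prod_def)
qed

lemma superdiff_r_deriv:
  fixes f :: "real \<times> real \<Rightarrow> real"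
  assumes p: "(p1, p2) \<in> frechet_superdiff f (t, r)"
    and d: "((\<lambda>s. f (t, s)) has_real_derivative D) (at r)"
  shows "p2 \<le> D"
proof (rule superdiff_r[OF p])
  have "((\<lambda>s. (f (t, r + s * (-1)) - f (t, r)) / s) \<longlongrightarrow> D * (-1)) (at_right 0)"
    using deriv_dir[OF d, of "-1"] by simp
  from tendsto_minus[OF this] show "((\<lambda>s. (f (t, r) - f (t, r - s)) / s) \<longlongrightarrow> D) (at_right 0)"
    by (simp add: algebra_simps minus_divide_left)
qed

lemma superdiff_r_blow:
  fixes f :: "real \<times> real \<Rightarrow> real"
  assumes p: "(p1, p2) \<in> frechet_superdiff f (t, r)"
    and ev: "\<forall>\<^sub>F s in at_right 0. f (t, r + s) - f (t, r) \<ge> (p2 + 1) * s"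
  shows False
proof -
  have n: "norm (0::real, 1::real) = 1" by (simp add: norm_Pair)
  have "\<forall>\<^sub>F s in at_right 0. f ((t, r) + s *\<^sub>R (0, 1)) - f (t, r) \<ge> ((p1, p2) \<bullet> (0, 1) + norm (0::real, 1::real)) * s"
    using ev unfolding n by simp
  from superdiff_dir_blow[OF p _ this] show False by (simp add: zero_prod_def)
qed


lemma ident:
  fixes \<alpha> u w \<tau> :: real
  assumes a: "\<alpha> > 1" and u: "u > 0" and w: "w > 0" and t: "\<tau> > 0"
  defines "e \<equiv> 1 / (\<alpha> - 1)" and "\<beta> \<equiv> \<alpha> / (\<alpha> - 1)" and "\<gamma> \<equiv> (\<alpha> - 1) / \<alpha>"
    and "c \<equiv> \<alpha> powr (- 1 / (\<alpha> - 1))"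
  shows "\<gamma> * u powr (\<gamma> - 1) * (- (c * w powr \<beta> * (e * \<tau> powr (e - 1)) / (\<tau> powr e)\<^sup>2))
       + (\<gamma> * u powr (\<gamma> - 1) * (c * (\<beta> * w powr (\<beta> - 1)) / \<tau> powr e)) powr \<alpha> * u powr \<gamma> = 0"
proof -
  define lu lw lt la where "lu = ln u" "lw = ln w" "lt = ln \<tau>" "la = ln \<alpha>"
  have gb: "\<gamma> * \<beta> = 1" using a by (simp add: \<gamma>_def \<beta>_def)
  have ge: "\<gamma> * e = exp (- la)" using a by (simp add: \<gamma>_def e_def lu_lw_lt_la_def exp_minus ln_inverse inverse_eq_divide)
  have ce: "c = exp (- e * la)" using a by (simp add: c_def e_def lu_lw_lt_la_def powr_def)
  have be: "\<beta> - 1 = e" using a by (simp add: \<beta>_def e_def field_simps)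
  have ae: "\<alpha> * e = e + 1" using a by (simp add: e_def field_simps)
  have ag: "\<alpha> * (\<gamma> - 1) = - 1" using a by (simp add: \<gamma>_def field_simps)
  have eb: "\<beta> = e + 1" using be by simp
  have X: "\<gamma> * u powr (\<gamma> - 1) * (c * (\<beta> * w powr (\<beta> - 1)) / \<tau> powr e)
      = exp ((\<gamma> - 1) * lu - e * la + e * lw - e * lt)"
  proof -
    have "\<gamma> * u powr (\<gamma> - 1) * (c * (\<beta> * w powr (\<beta> - 1)) / \<tau> powr e)
       = (\<gamma> * \<beta>) * u powr (\<gamma> - 1) * c * w powr (\<beta> - 1) / \<tau> powr e" by simp
    also have "\<dots> = exp ((\<gamma> - 1) * lu) * exp (- e * la) * exp (e * lw) / exp (e * lt)"
      using u w t by (simp add: gb ce be powr_def lu_lw_lt_la_def)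
    also have "\<dots> = exp ((\<gamma> - 1) * lu - e * la + e * lw - e * lt)"
      by (simp add: exp_add exp_diff exp_minus field_simps)
    finally show ?thesis .
  qed
  have Y: "\<gamma> * u powr (\<gamma> - 1) * (- (c * w powr \<beta> * (e * \<tau> powr (e - 1)) / (\<tau> powr e)\<^sup>2))
      = - exp ((\<gamma> - 1) * lu - la - e * la + (e + 1) * lw - (e + 1) * lt)"
  proof -
    have "\<gamma> * u powr (\<gamma> - 1) * (- (c * w powr \<beta> * (e * \<tau> powr (e - 1)) / (\<tau> powr e)\<^sup>2))
       = - ((\<gamma> * e) * u powr (\<gamma> - 1) * c * w powr \<beta> * \<tau> powr (e - 1) / (\<tau> powr e)\<^sup>2)" by simp
    also have "\<dots> = - (exp (- la) * exp ((\<gamma> - 1) * lu) * exp (- e * la) * exp ((e + 1) * lw) * exp ((e - 1) * lt) / (exp (e * lt))\<^sup>2)"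
      using u w t by (simp add: ge ce eb powr_def lu_lw_lt_la_def)
    also have "\<dots> = - exp ((\<gamma> - 1) * lu - la - e * la + (e + 1) * lw - (e + 1) * lt)"
      by (simp add: exp_add[symmetric] exp_diff[symmetric] power2_eq_square algebra_simps)
    finally show ?thesis .
  qed
  have Z: "exp ((\<gamma> - 1) * lu - e * la + e * lw - e * lt) powr \<alpha> * u powr \<gamma>
      = exp ((\<gamma> - 1) * lu - la - e * la + (e + 1) * lw - (e + 1) * lt)"
  proof -
    have "exp ((\<gamma> - 1) * lu - e * la + e * lw - e * lt) powr \<alpha> * u powr \<gamma>
        = exp (\<alpha> * ((\<gamma> - 1) * lu - e * la + e * lw - e * lt) + \<gamma> * lu)"
      using u by (simp add: powr_def lu_lw_lt_la_def mult_exp_exp algebra_simps)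
    also have "\<alpha> * ((\<gamma> - 1) * lu - e * la + e * lw - e * lt) + \<gamma> * lu
        = (\<alpha> * (\<gamma> - 1)) * lu - (\<alpha> * e) * la + (\<alpha> * e) * lw - (\<alpha> * e) * lt + \<gamma> * lu"
      by (simp add: algebra_simps)
    also have "\<dots> = (\<gamma> - 1) * lu - la - e * la + (e + 1) * lw - (e + 1) * lt"
      unfolding ag ae by (simp add: algebra_simps)
    finally show ?thesis by simp
  qed
  show ?thesis unfolding X Y Z by simp
qed


definition "ee \<alpha> = 1 / (\<alpha> - 1)"
definition "bb \<alpha> = \<alpha> / (\<alpha> - 1)"
definition "gg \<alpha> = (\<alpha> - 1) / \<alpha>"
definition "cc \<alpha> = \<alpha> powr (- 1 / (\<alpha> - 1))"
definition "AA \<alpha> M T t = \<alpha> powr (1 / \<alpha>) * M * (T - t) powr (1 / \<alpha>)"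
definition "UU \<alpha> M c0 T t r = M powr bb \<alpha> - cc \<alpha> * (c0 - r) powr bb \<alpha> / (T - t) powr ee \<alpha>"

lemma mlow_alt: "mlow \<alpha> M c0 T t r =
  (if r < c0 - AA \<alpha> M T t then 0 else if r < c0 then UU \<alpha> M c0 T t r powr gg \<alpha> else M)"
  by (simp add: mlow_def AA_def UU_def gg_def cc_def bb_def ee_def Let_def)

context
  fixes \<alpha> M c0 T :: real
  assumes a1: "\<alpha> > 1" and Mp: "M > 0" and c0p: "c0 > 0" and Tp: "T > 0"
begin

lemma par: "ee \<alpha> > 0" "bb \<alpha> > 1" "gg \<alpha> > 0" "gg \<alpha> < 1" "cc \<alpha> > 0"
  "bb \<alpha> - 1 = ee \<alpha>" "gg \<alpha> * bb \<alpha> = 1" "1 / \<alpha> + gg \<alpha> = 1"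
  using a1 by (auto simp: ee_def bb_def gg_def cc_def field_simps)

lemma AA_pos: "t < T \<Longrightarrow> AA \<alpha> M T t > 0"
  using a1 Mp by (simp add: AA_def)

lemma key: assumes "t < T"
  shows "cc \<alpha> * AA \<alpha> M T t powr bb \<alpha> / (T - t) powr ee \<alpha> = M powr bb \<alpha>"
proof -
  have tp: "T - t > 0" using assms by simp
  have "AA \<alpha> M T t powr bb \<alpha> = (\<alpha> powr (1 / \<alpha>)) powr bb \<alpha> * M powr bb \<alpha> * ((T - t) powr (1 / \<alpha>)) powr bb \<alpha>"
    unfolding AA_def using a1 Mp tp by (simp add: powr_mult)
  also have "\<dots> = \<alpha> powr ee \<alpha> * M powr bb \<alpha> * (T - t) powr ee \<alpha>"
    using a1 by (simp add: powr_powr bb_def ee_def)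
  finally have A: "AA \<alpha> M T t powr bb \<alpha> = \<alpha> powr ee \<alpha> * M powr bb \<alpha> * (T - t) powr ee \<alpha>" .
  have "cc \<alpha> * \<alpha> powr ee \<alpha> = 1"
    using a1 by (simp add: cc_def ee_def powr_add[symmetric])
  then show ?thesis using tp unfolding A by (simp add: field_simps)
qed

lemma cmp_less: assumes "t < T" "w \<ge> 0"
  shows "cc \<alpha> * w powr bb \<alpha> / (T - t) powr ee \<alpha> < M powr bb \<alpha> \<longleftrightarrow> w < AA \<alpha> M T t"
proof -
  have tp: "T - t > 0" using assms by simp
  have pos: "cc \<alpha> / (T - t) powr ee \<alpha> > 0" using par tp by simp
  have "cc \<alpha> * w powr bb \<alpha> / (T - t) powr ee \<alpha> < M powr bb \<alpha> \<longleftrightarrow>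
        cc \<alpha> * w powr bb \<alpha> / (T - t) powr ee \<alpha> < cc \<alpha> * AA \<alpha> M T t powr bb \<alpha> / (T - t) powr ee \<alpha>"
    using key[OF assms(1)] by simp
  also have "\<dots> \<longleftrightarrow> w powr bb \<alpha> < AA \<alpha> M T t powr bb \<alpha>" using par(5) tp
    by (simp add: divide_less_cancel mult_less_cancel_left_pos)
  also have "\<dots> \<longleftrightarrow> w < AA \<alpha> M T t"
  proof
    assume h: "w powr bb \<alpha> < AA \<alpha> M T t powr bb \<alpha>"
    show "w < AA \<alpha> M T t"
    proof (rule ccontr)
      assume "\<not> w < AA \<alpha> M T t"
      then have "AA \<alpha> M T t powr bb \<alpha> \<le> w powr bb \<alpha>"
        using AA_pos[OF assms(1)] par by (intro powr_mono2) auto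
      with h show False by simp
    qed
  next
    assume "w < AA \<alpha> M T t"
    then show "w powr bb \<alpha> < AA \<alpha> M T t powr bb \<alpha>"
      using assms par by (intro powr_less_mono2) auto
  qed
  finally show ?thesis .
qed

lemma mlow_G: assumes "t < T"
  shows "mlow \<alpha> M c0 T t r =
    (max (M powr bb \<alpha> - cc \<alpha> * (max (c0 - r) 0) powr bb \<alpha> / (T - t) powr ee \<alpha>) 0) powr gg \<alpha>"
proof -
  consider "r < c0 - AA \<alpha> M T t" | "c0 - AA \<alpha> M T t \<le> r" "r < c0" | "c0 \<le> r" by linarith
  then show ?thesis
  proof cases
    case 1
    then have "\<not> cc \<alpha> * (c0 - r) powr bb \<alpha> / (T - t) powr ee \<alpha> < M powr bb \<alpha>"
      using cmp_less[OF assms, of "c0 - r"] AA_pos[OF assms] by auto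
    then show ?thesis using 1 AA_pos[OF assms] by (simp add: mlow_alt)
  next
    case 2
    then have "\<not> cc \<alpha> * (c0 - r) powr bb \<alpha> / (T - t) powr ee \<alpha> > M powr bb \<alpha>"
    proof -
      have "(c0 - r) powr bb \<alpha> \<le> AA \<alpha> M T t powr bb \<alpha>"
        using 2 par by (intro powr_mono2) auto
      then have "cc \<alpha> * (c0 - r) powr bb \<alpha> / (T - t) powr ee \<alpha> \<le> cc \<alpha> * AA \<alpha> M T t powr bb \<alpha> / (T - t) powr ee \<alpha>"
        using par assms by (intro divide_right_mono mult_left_mono) auto
      then show ?thesis using key[OF assms] by simp
    qed
    then show ?thesis using 2 by (simp add: mlow_alt UU_def)
  next
    case 3
    have "bb \<alpha> * gg \<alpha> = 1" using par(7) by (simp add: mult.commute)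
    then have "(M powr bb \<alpha>) powr gg \<alpha> = M" unfolding powr_powr using Mp by simp
    then show ?thesis using 3 AA_pos[OF assms] by (simp add: mlow_alt)
  qed
qed

lemma cont: "continuous_on ({0..<T} \<times> {0..}) (\<lambda>(t, \<rho>). mlow \<alpha> M c0 T t \<rho>)"
proof -
  let ?G = "\<lambda>x::real\<times>real. (max (M powr bb \<alpha> - cc \<alpha> * (max (c0 - snd x) 0) powr bb \<alpha> / (T - fst x) powr ee \<alpha>) 0) powr gg \<alpha>"
  have "continuous_on ({0..<T} \<times> {0..}) ?G"
  proof (rule continuous_on_powr')
    have c1: "continuous_on ({0..<T} \<times> {0..}) (\<lambda>x::real\<times>real. (max (c0 - snd x) 0) powr bb \<alpha>)"
      using par by (intro continuous_on_powr' continuous_intros) auto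
    have c2: "continuous_on ({0..<T} \<times> {0..}) (\<lambda>x::real\<times>real. (T - fst x) powr ee \<alpha>)"
      by (intro continuous_on_powr' continuous_intros) (auto simp: par)
    show "continuous_on ({0..<T} \<times> {0..}) (\<lambda>x::real\<times>real. max (M powr bb \<alpha> - cc \<alpha> * (max (c0 - snd x) 0) powr bb \<alpha> / (T - fst x) powr ee \<alpha>) 0)"
      by (intro continuous_intros c1 c2) auto
    show "continuous_on ({0..<T} \<times> {0..}) (\<lambda>x::real\<times>real. gg \<alpha>)" by (rule continuous_on_const)
    show "\<forall>x\<in>{0..<T} \<times> {0..}. 0 \<le> max (M powr bb \<alpha> - cc \<alpha> * max (c0 - snd x) 0 powr bb \<alpha> / (T - fst x) powr ee \<alpha>) 0 \<and>
         (max (M powr bb \<alpha> - cc \<alpha> * max (c0 - snd x) 0 powr bb \<alpha> / (T - fst x) powr ee \<alpha>) 0 = 0 \<longrightarrow> 0 < gg \<alpha>)"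
      using par by auto
  qed
  then show ?thesis
    by (rule continuous_on_cong[THEN iffD1, rotated 2]) (auto simp: mlow_G)
qed


abbreviation "mm \<equiv> (\<lambda>(s, r). mlow \<alpha> M c0 T s r)"

lemma sd_t: "(p1, p2) \<in> frechet_superdiff mm (t, \<rho>) \<Longrightarrow>
   ((\<lambda>s. mlow \<alpha> M c0 T s \<rho>) has_real_derivative D) (at t) \<Longrightarrow> p1 \<le> D"
  using superdiff_t[of p1 p2 mm t \<rho> D] by simp

lemma sd_rd: "(p1, p2) \<in> frechet_superdiff mm (t, \<rho>) \<Longrightarrow>
   ((\<lambda>s. mlow \<alpha> M c0 T t s) has_real_derivative D) (at \<rho>) \<Longrightarrow> p2 \<le> D"
  using superdiff_r_deriv[of p1 p2 mm t \<rho> D] by simp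

lemma sd_r: "(p1, p2) \<in> frechet_superdiff mm (t, \<rho>) \<Longrightarrow>
   ((\<lambda>s. (mlow \<alpha> M c0 T t \<rho> - mlow \<alpha> M c0 T t (\<rho> - s)) / s) \<longlongrightarrow> D) (at_right 0) \<Longrightarrow> p2 \<le> D"
  using superdiff_r[of p1 p2 mm t \<rho> D] by simp

lemma sd_blow: "(p1, p2) \<in> frechet_superdiff mm (t, \<rho>) \<Longrightarrow>
   (\<forall>\<^sub>F s in at_right 0. mlow \<alpha> M c0 T t (\<rho> + s) - mlow \<alpha> M c0 T t \<rho> \<ge> (p2 + 1) * s) \<Longrightarrow> False"
  using superdiff_r_blow[of p1 p2 mm t \<rho>] by simp

lemma AA_nhds: "t < T \<Longrightarrow> (AA \<alpha> M T \<longlongrightarrow> AA \<alpha> M T t) (nhds t)"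
  unfolding AA_def
  by (rule tendsto_at_iff_tendsto_nhds[THEN iffD1]) (use a1 in \<open>auto intro!: tendsto_intros\<close>)

lemma ev_T: "t < T \<Longrightarrow> \<forall>\<^sub>F s in nhds t. s < T"
  using eventually_nhds_in_open[of "{..<T}" t] by simp

lemma ev_const_t:
  assumes "t < T" "\<forall>\<^sub>F s in nhds t. mlow \<alpha> M c0 T s \<rho> = k"
  shows "((\<lambda>s. mlow \<alpha> M c0 T s \<rho>) has_real_derivative 0) (at t)"
proof -
  show ?thesis using DERIV_cong_ev[OF refl assms(2) refl, of 0] by simp
qed


lemma ev_const_r:
  assumes "\<forall>\<^sub>F r in nhds \<rho>. mlow \<alpha> M c0 T t r = k"
  shows "((\<lambda>r. mlow \<alpha> M c0 T t r) has_real_derivative 0) (at \<rho>)"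
  using DERIV_cong_ev[OF refl assms refl, of 0] by simp

lemma cmp_le: assumes "t < T" "w \<ge> 0" "w \<le> AA \<alpha> M T t"
  shows "cc \<alpha> * w powr bb \<alpha> / (T - t) powr ee \<alpha> \<le> M powr bb \<alpha>"
proof -
  have "w powr bb \<alpha> \<le> AA \<alpha> M T t powr bb \<alpha>"
    using assms par by (intro powr_mono2) auto
  then have "cc \<alpha> * w powr bb \<alpha> / (T - t) powr ee \<alpha> \<le> cc \<alpha> * AA \<alpha> M T t powr bb \<alpha> / (T - t) powr ee \<alpha>"
    using par assms by (intro divide_right_mono mult_left_mono) auto
  then show ?thesis using key[OF assms(1)] by simp
qed

lemma case1:
  assumes t: "0 < t" "t < T" and p: "(p1, p2) \<in> frechet_superdiff mm (t, \<rho>)"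
    and r: "\<rho> < c0 - AA \<alpha> M T t"
  shows "p1 + (max p2 0) powr \<alpha> * mlow \<alpha> M c0 T t \<rho> \<le> 0"
proof -
  have "\<forall>\<^sub>F s in nhds t. AA \<alpha> M T s < c0 - \<rho>"
    using order_tendstoD(2)[OF AA_nhds[OF t(2)]] r by simp
  then have "\<forall>\<^sub>F s in nhds t. mlow \<alpha> M c0 T s \<rho> = 0"
    by (rule eventually_mono) (simp add: mlow_alt)
  from sd_t[OF p ev_const_t[OF t(2) this]] have "p1 \<le> 0" .
  moreover have "mlow \<alpha> M c0 T t \<rho> = 0" using r by (simp add: mlow_alt)
  ultimately show ?thesis by simp
qed

lemma t_ge_c0:
  assumes t: "t < T" and p: "(p1, p2) \<in> frechet_superdiff mm (t, \<rho>)" and r: "c0 \<le> \<rho>"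
  shows "p1 \<le> 0"
proof -
  have "\<forall>\<^sub>F s in nhds t. mlow \<alpha> M c0 T s \<rho> = M"
    using ev_T[OF t]
  proof (rule eventually_mono)
    fix s assume "s < T"
    then have "AA \<alpha> M T s > 0" by (rule AA_pos)
    then show "mlow \<alpha> M c0 T s \<rho> = M" using r by (simp add: mlow_alt)
  qed
  from sd_t[OF p ev_const_t[OF t this]] show ?thesis .
qed

lemma case5:
  assumes t: "0 < t" "t < T" and p: "(p1, p2) \<in> frechet_superdiff mm (t, \<rho>)"
    and r: "c0 < \<rho>"
  shows "p1 + (max p2 0) powr \<alpha> * mlow \<alpha> M c0 T t \<rho> \<le> 0"
proof -
  have "p1 \<le> 0" using t_ge_c0[OF t(2) p] r by simp
  have "\<forall>\<^sub>F r in nhds \<rho>. c0 < r"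
    using eventually_nhds_in_open[of "{c0<..}" \<rho>] r by simp
  then have "\<forall>\<^sub>F r in nhds \<rho>. mlow \<alpha> M c0 T t r = M"
    by (rule eventually_mono) (use AA_pos[OF t(2)] in \<open>auto simp: mlow_alt\<close>)
  from sd_rd[OF p ev_const_r[OF this]] have "p2 \<le> 0" .
  with \<open>p1 \<le> 0\<close> show ?thesis by simp
qed

lemma case4:
  assumes t: "0 < t" "t < T" and p: "(p1, p2) \<in> frechet_superdiff mm (t, \<rho>)"
    and r: "\<rho> = c0"
  shows "p1 + (max p2 0) powr \<alpha> * mlow \<alpha> M c0 T t \<rho> \<le> 0"
proof -
  have "p1 \<le> 0" using t_ge_c0[OF t(2) p] r by simp
  define \<tau> where "\<tau> = T - t"
  have tp: "\<tau> > 0" using t by (simp add: \<tau>_def)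
  define C where "C = M * cc \<alpha> / (\<tau> powr ee \<alpha> * M powr bb \<alpha>)"
  have Mb: "M powr bb \<alpha> > 0" using Mp by simp
  have MbG: "(M powr bb \<alpha>) powr gg \<alpha> = M"
  proof -
    have "bb \<alpha> * gg \<alpha> = 1" using par(7) by (simp add: mult.commute)
    then show ?thesis unfolding powr_powr using Mp by simp
  qed
  have bound: "0 \<le> (mlow \<alpha> M c0 T t \<rho> - mlow \<alpha> M c0 T t (\<rho> - s)) / s \<and>
     (mlow \<alpha> M c0 T t \<rho> - mlow \<alpha> M c0 T t (\<rho> - s)) / s \<le> C * s powr (bb \<alpha> - 1)"
    if s: "0 < s" "s < AA \<alpha> M T t" for s
  proof -
    define u where "u = M powr bb \<alpha> - cc \<alpha> * s powr bb \<alpha> / \<tau> powr ee \<alpha>"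
    have m0: "mlow \<alpha> M c0 T t \<rho> = M" using r AA_pos[OF t(2)] by (simp add: mlow_alt)
    have m1: "mlow \<alpha> M c0 T t (\<rho> - s) = u powr gg \<alpha>"
      using r s by (simp add: mlow_alt UU_def u_def \<tau>_def)
    have u0: "0 \<le> u" using cmp_le[OF t(2), of s] s by (simp add: u_def \<tau>_def)
    have X: "cc \<alpha> * s powr bb \<alpha> / \<tau> powr ee \<alpha> \<ge> 0" using par tp by simp
    have u1: "u \<le> M powr bb \<alpha>" using X by (simp add: u_def)
    have up: "u powr gg \<alpha> \<le> M" using powr_mono2[of "gg \<alpha>" u "M powr bb \<alpha>"] par u0 u1 MbG by simp
    have "u / M powr bb \<alpha> \<le> (u / M powr bb \<alpha>) powr gg \<alpha>"
      using powr_mono'[of "gg \<alpha>" 1 "u / M powr bb \<alpha>"] par u0 u1 Mb by (simp add: powr_one)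
    also have "\<dots> = u powr gg \<alpha> / M" by (simp add: powr_divide MbG)
    finally have low: "M * (u / M powr bb \<alpha>) \<le> u powr gg \<alpha>" using Mp by (simp add: field_simps)
    have "M - M * (u / M powr bb \<alpha>) = C * s powr bb \<alpha>"
      using Mb by (simp add: u_def C_def field_simps)
    also have "s powr bb \<alpha> = s powr (bb \<alpha> - 1) * s"
      using s by (simp add: powr_diff)
    finally have "M - u powr gg \<alpha> \<le> C * s powr (bb \<alpha> - 1) * s" using low by simp
    then have "(M - u powr gg \<alpha>) / s \<le> C * s powr (bb \<alpha> - 1)"
      using s by (simp add: divide_le_eq)
    then show ?thesis using m0 m1 up s by simp
  qed
  have ev: "\<forall>\<^sub>F s in at_right 0. 0 < s \<and> s < AA \<alpha> M T t"
    using eventually_at_right_less[of 0] eventually_at_right[of 0 "AA \<alpha> M T t"] AA_pos[OF t(2)]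
    by (auto elim: eventually_elim2)
  have lim: "((\<lambda>s. C * s powr (bb \<alpha> - 1)) \<longlongrightarrow> 0) (at_right 0)"
  proof (rule tendsto_mult_right_zero)
    show "((\<lambda>s::real. s powr (bb \<alpha> - 1)) \<longlongrightarrow> 0) (at_right 0)"
      by (rule tendsto_zero_powrI[of _ _ _ "bb \<alpha> - 1"])
         (auto intro: tendsto_ident_at eventually_mono[OF eventually_at_right_less[of 0]] simp: par)
  qed
  have "((\<lambda>s. (mlow \<alpha> M c0 T t \<rho> - mlow \<alpha> M c0 T t (\<rho> - s)) / s) \<longlongrightarrow> 0) (at_right 0)"
    by (rule tendsto_sandwich[OF _ _ tendsto_const lim])
       (use ev bound in \<open>auto elim: eventually_mono\<close>)
  from sd_r[OF p this] have "p2 \<le> 0" .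
  with \<open>p1 \<le> 0\<close> show ?thesis by simp
qed


lemma case3:
  assumes t: "0 < t" "t < T" and p: "(p1, p2) \<in> frechet_superdiff mm (t, \<rho>)"
    and r1: "c0 - AA \<alpha> M T t < \<rho>" and r2: "\<rho> < c0"
  shows "p1 + (max p2 0) powr \<alpha> * mlow \<alpha> M c0 T t \<rho> \<le> 0"
proof -
  define \<tau> where "\<tau> = T - t"
  define w where "w = c0 - \<rho>"
  define u where "u = UU \<alpha> M c0 T t \<rho>"
  have tp: "\<tau> > 0" using t by (simp add: \<tau>_def)
  have wp: "w > 0" using r2 by (simp add: w_def)
  have up: "u > 0" using cmp_less[OF t(2), of w] wp r1
    by (simp add: u_def UU_def w_def \<tau>_def)
  define Dr where "Dr = gg \<alpha> * u powr (gg \<alpha> - 1) * (cc \<alpha> * (bb \<alpha> * w powr (bb \<alpha> - 1)) / \<tau> powr ee \<alpha>)"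
  define Dt where "Dt = gg \<alpha> * u powr (gg \<alpha> - 1) * (- (cc \<alpha> * w powr bb \<alpha> * (ee \<alpha> * \<tau> powr (ee \<alpha> - 1)) / (\<tau> powr ee \<alpha>)\<^sup>2))"
  have m: "mlow \<alpha> M c0 T t \<rho> = u powr gg \<alpha>" using r1 r2 by (simp add: mlow_alt u_def)
  have dw: "((\<lambda>r. (c0 - r) powr bb \<alpha>) has_real_derivative bb \<alpha> * (c0 - \<rho>) powr (bb \<alpha> - 1) * (-1)) (at \<rho>)"
    using DERIV_fun_powr[OF DERIV_diff[OF DERIV_const DERIV_ident], of c0 \<rho> "bb \<alpha>"] r2 by simp
  have dU: "((\<lambda>r. UU \<alpha> M c0 T t r) has_real_derivative
      0 - cc \<alpha> * (bb \<alpha> * (c0 - \<rho>) powr (bb \<alpha> - 1) * (-1)) / (T - t) powr ee \<alpha>) (at \<rho>)"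
    unfolding UU_def by (intro DERIV_diff DERIV_const DERIV_cdivide DERIV_cmult dw)
  have dR: "((\<lambda>r. UU \<alpha> M c0 T t r powr gg \<alpha>) has_real_derivative Dr) (at \<rho>)"
    using DERIV_fun_powr[OF dU, of "gg \<alpha>"] up by (simp add: u_def Dr_def w_def \<tau>_def)
  have evR: "\<forall>\<^sub>F r in nhds \<rho>. mlow \<alpha> M c0 T t r = UU \<alpha> M c0 T t r powr gg \<alpha>"
    using eventually_nhds_in_open[of "{c0 - AA \<alpha> M T t<..<c0}" \<rho>] r1 r2
    by (auto elim!: eventually_mono simp: mlow_alt)
  have "((\<lambda>r. mlow \<alpha> M c0 T t r) has_real_derivative Dr) (at \<rho>)"
    using DERIV_cong_ev[OF refl evR refl, of Dr] dR by simp
  from sd_rd[OF p this] have p2: "p2 \<le> Dr" .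
  have dtau: "((\<lambda>s. (T - s) powr ee \<alpha>) has_real_derivative ee \<alpha> * (T - t) powr (ee \<alpha> - 1) * (-1)) (at t)"
    using DERIV_fun_powr[OF DERIV_diff[OF DERIV_const DERIV_ident], of T t "ee \<alpha>"] t by simp
  have dUt: "((\<lambda>s. UU \<alpha> M c0 T s \<rho>) has_real_derivative
      0 - (0 * (T - t) powr ee \<alpha> - cc \<alpha> * (c0 - \<rho>) powr bb \<alpha> * (ee \<alpha> * (T - t) powr (ee \<alpha> - 1) * (-1)))
        / ((T - t) powr ee \<alpha> * (T - t) powr ee \<alpha>)) (at t)"
    unfolding UU_def using t by (intro DERIV_diff DERIV_const DERIV_divide dtau) auto
  have dT: "((\<lambda>s. UU \<alpha> M c0 T s \<rho> powr gg \<alpha>) has_real_derivative Dt) (at t)"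
    using DERIV_fun_powr[OF dUt, of "gg \<alpha>"] up
    by (simp add: u_def Dt_def w_def \<tau>_def power2_eq_square)
  have evT: "\<forall>\<^sub>F s in nhds t. mlow \<alpha> M c0 T s \<rho> = UU \<alpha> M c0 T s \<rho> powr gg \<alpha>"
  proof -
    have "\<forall>\<^sub>F s in nhds t. AA \<alpha> M T s > c0 - \<rho>"
      using order_tendstoD(1)[OF AA_nhds[OF t(2)]] r1 by simp
    then show ?thesis using r2 by (auto elim!: eventually_mono simp: mlow_alt)
  qed
  have "((\<lambda>s. mlow \<alpha> M c0 T s \<rho>) has_real_derivative Dt) (at t)"
    using DERIV_cong_ev[OF refl evT refl, of Dt] dT by simp
  from sd_t[OF p this] have p1: "p1 \<le> Dt" .
  have Drp: "Dr > 0" using par up wp tp by (simp add: Dr_def)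
  have "(max p2 0) powr \<alpha> \<le> Dr powr \<alpha>"
    using p2 Drp a1 by (intro powr_mono2) auto
  then have "(max p2 0) powr \<alpha> * u powr gg \<alpha> \<le> Dr powr \<alpha> * u powr gg \<alpha>"
    by (rule mult_right_mono) simp
  moreover have "Dt + Dr powr \<alpha> * u powr gg \<alpha> = 0"
    using ident[OF a1 up wp tp] unfolding Dt_def Dr_def ee_def bb_def gg_def cc_def .
  ultimately show ?thesis using p1 m by simp
qed


lemma case2:
  assumes t: "0 < t" "t < T" and p: "(p1, p2) \<in> frechet_superdiff mm (t, \<rho>)"
    and r: "\<rho> = c0 - AA \<alpha> M T t"
  shows False
proof -
  define A where "A = AA \<alpha> M T t"
  define \<tau> where "\<tau> = T - t"
  have Ap: "A > 0" using AA_pos[OF t(2)] by (simp add: A_def)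
  have tp: "\<tau> > 0" using t by (simp add: \<tau>_def)
  define k where "k = cc \<alpha> * A powr (bb \<alpha> - 1) / \<tau> powr ee \<alpha>"
  have kp: "k > 0" using par Ap tp by (simp add: k_def)
  define q where "q = max (p2 + 1) 1"
  have qp: "q > 0" by (simp add: q_def)
  define \<delta> where "\<delta> = (k powr gg \<alpha> / q) powr \<alpha>"
  have dp: "\<delta> > 0" using kp qp by (simp add: \<delta>_def)
  have kA: "k * A = M powr bb \<alpha>"
  proof -
    have "A powr bb \<alpha> = A powr (bb \<alpha> - 1) * A" using Ap by (simp add: powr_diff)
    then show ?thesis using key[OF t(2)] by (simp add: k_def A_def \<tau>_def field_simps)
  qed
  have m0: "mlow \<alpha> M c0 T t \<rho> = 0"
  proof -
    have "UU \<alpha> M c0 T t \<rho> = 0" using key[OF t(2)] r by (simp add: UU_def)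
    then show ?thesis using r Ap by (simp add: mlow_alt A_def)
  qed
  have main: "mlow \<alpha> M c0 T t (\<rho> + s) - mlow \<alpha> M c0 T t \<rho> \<ge> (p2 + 1) * s"
    if s: "0 < s" "s < \<delta>" "s < A" for s
  proof -
    have m1: "mlow \<alpha> M c0 T t (\<rho> + s) = (M powr bb \<alpha> - cc \<alpha> * (A - s) powr bb \<alpha> / \<tau> powr ee \<alpha>) powr gg \<alpha>"
      using r s by (simp add: mlow_alt UU_def A_def \<tau>_def)
    have "(A - s) powr bb \<alpha> = (A - s) powr (bb \<alpha> - 1) * (A - s)" using s by (simp add: powr_diff)
    also have "\<dots> \<le> A powr (bb \<alpha> - 1) * (A - s)"
      using s par by (intro mult_right_mono powr_mono2) auto
    finally have "cc \<alpha> * (A - s) powr bb \<alpha> / \<tau> powr ee \<alpha> \<le> cc \<alpha> * (A powr (bb \<alpha> - 1) * (A - s)) / \<tau> powr ee \<alpha>"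
      using par tp by (intro divide_right_mono mult_left_mono) auto
    also have "\<dots> = k * A - k * s"
    proof -
      have "\<tau> powr ee \<alpha> \<noteq> 0" using tp by simp
      then show ?thesis by (simp add: k_def diff_divide_distrib right_diff_distrib)
    qed
    finally have U: "k * s \<le> M powr bb \<alpha> - cc \<alpha> * (A - s) powr bb \<alpha> / \<tau> powr ee \<alpha>" using kA by simp
    have "(k * s) powr gg \<alpha> \<le> mlow \<alpha> M c0 T t (\<rho> + s)"
      unfolding m1 using U kp s par by (intro powr_mono2) auto
    moreover have "(k * s) powr gg \<alpha> = k powr gg \<alpha> * s powr gg \<alpha>" by (simp add: powr_mult)
    moreover have ss: "s = s powr (1 / \<alpha>) * s powr gg \<alpha>"
    proof -
      have "s powr (1 / \<alpha>) * s powr gg \<alpha> = s powr (1 / \<alpha> + gg \<alpha>)" by (simp add: powr_add)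
      also have "\<dots> = s" using par(8) s by simp
      finally show ?thesis by simp
    qed
    moreover have "s powr (1 / \<alpha>) < k powr gg \<alpha> / q"
    proof -
      have "s powr (1 / \<alpha>) < \<delta> powr (1 / \<alpha>)" using s a1 by (intro powr_less_mono2) auto
      also have "\<delta> powr (1 / \<alpha>) = k powr gg \<alpha> / q"
        unfolding \<delta>_def powr_powr using a1 kp qp by simp
      finally show ?thesis .
    qed
    ultimately have "q * s \<le> mlow \<alpha> M c0 T t (\<rho> + s)"
    proof -
      assume a: "(k * s) powr gg \<alpha> \<le> mlow \<alpha> M c0 T t (\<rho> + s)"
        "(k * s) powr gg \<alpha> = k powr gg \<alpha> * s powr gg \<alpha>" "s = s powr (1 / \<alpha>) * s powr gg \<alpha>"
        "s powr (1 / \<alpha>) < k powr gg \<alpha> / q"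
      have "q * s = (q * s powr (1 / \<alpha>)) * s powr gg \<alpha>" using a(3) by (metis mult.assoc)
      also have "\<dots> \<le> k powr gg \<alpha> * s powr gg \<alpha>"
        using a(4) qp by (intro mult_right_mono) (auto simp: field_simps)
      finally show ?thesis using a(1,2) by simp
    qed
    moreover have "(p2 + 1) * s \<le> q * s" using s by (intro mult_right_mono) (auto simp: q_def)
    ultimately show ?thesis using m0 by simp
  qed
  have "\<forall>\<^sub>F s in at_right 0. 0 < s \<and> s < \<delta> \<and> s < A"
    using dp Ap by (auto simp: eventually_at_right_field intro!: exI[of _ "min \<delta> A"])
  then have "\<forall>\<^sub>F s in at_right 0. mlow \<alpha> M c0 T t (\<rho> + s) - mlow \<alpha> M c0 T t \<rho> \<ge> (p2 + 1) * s"
    by (rule eventually_mono) (use main in auto)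
  from sd_blow[OF p this] show False .
qed

end
theorem mainTheorem7:
  fixes \<alpha> M c0 T :: real
  assumes "\<alpha> > 1" and "M > 0" and "c0 > 0" and "T > 0"
  shows "continuous_on ({0..<T} \<times> {0..}) (\<lambda>(t, \<rho>). mlow \<alpha> M c0 T t \<rho>)
         \<and> (\<forall>t \<rho> p1 p2. 0 < t \<and> t < T \<and> 0 < \<rho> \<and>
              (p1, p2) \<in> frechet_superdiff (\<lambda>(s, r). mlow \<alpha> M c0 T s r) (t, \<rho>) \<longrightarrow>
              p1 + (max p2 0) powr \<alpha> * mlow \<alpha> M c0 T t \<rho> \<le> 0)"
proof (intro conjI allI impI)
  show "continuous_on ({0..<T} \<times> {0..}) (\<lambda>(t, \<rho>). mlow \<alpha> M c0 T t \<rho>)"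
    by (rule cont[OF assms])
next
  fix t \<rho> p1 p2
  assume H: "0 < t \<and> t < T \<and> 0 < \<rho> \<and>
              (p1, p2) \<in> frechet_superdiff (\<lambda>(s, r). mlow \<alpha> M c0 T s r) (t, \<rho>)"
  then have t: "0 < t" "t < T" and p: "(p1, p2) \<in> frechet_superdiff (\<lambda>(s, r). mlow \<alpha> M c0 T s r) (t, \<rho>)"
    by auto
  consider "\<rho> < c0 - AA \<alpha> M T t" | "\<rho> = c0 - AA \<alpha> M T t" | "c0 - AA \<alpha> M T t < \<rho>" "\<rho> < c0"
    | "\<rho> = c0" | "c0 < \<rho>" by linarith
  then show "p1 + (max p2 0) powr \<alpha> * mlow \<alpha> M c0 T t \<rho> \<le> 0"
  proof cases
    case 1 then show ?thesis using case1[OF assms t p] by simp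
  next
    case 2 then show ?thesis using case2[OF assms t p] by simp
  next
    case 3 then show ?thesis using case3[OF assms t p] by simp
  next
    case 4 then show ?thesis using case4[OF assms t p] by simp
  next
    case 5 then show ?thesis using case5[OF assms t p] by simp
  qed
qed

end
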